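(* Let $X$ be a Hilbert space and let $B$ be a bounded self-adjoint operator on $X$ with $\rho(B)=\|B\|=1$ such that $-1$ is not an eigenvalue of $B$. Let $P$ be the orthogonal projection onto $\ker(I-B)$ and let $f\in X$ satisfy $Pf=0$. Then for every $x_0\in X$ the successive approximations $x_{n+1}=Bx_n+f$ satisfy $\|x_n-Bx_n-f\|\to 0$ as $n\to\infty$ (equivalently, the corrections $x_{n+1}-x_n$ tend to zero). No solvability of $x=Bx+f$ is assumed.
   Context: $I$ denotes the identity operator on $X$. *)

theory Defs
  imports "HOL-Analysis.Analysis"
begin

definition self_adjoint :: "('a::real_inner \<Rightarrow> 'a) \<Rightarrow> bool" where
  "self_adjoint B \<longleftrightarrow> bounded_linear B \<and> (\<forall>x y. inner (B x) y = inner x (B y))"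

text \<open>Spectral radius of a bounded operator, via Gelfand's formula
  rho(B) = lim_n ||B^n||^(1/n).\<close>
definition spectral_radius :: "('a::real_normed_vector \<Rightarrow> 'a) \<Rightarrow> real" where
  "spectral_radius B = lim (\<lambda>n. onorm (B ^^ Suc n) powr (1 / real (Suc n)))"

definition is_orth_proj :: "('a::real_inner \<Rightarrow> 'a) \<Rightarrow> 'a set \<Rightarrow> bool" where
  "is_orth_proj P K \<longleftrightarrow> (\<forall>x. P x \<in> K \<and> (\<forall>y\<in>K. inner (x - P x) y = 0))"

end

theory Submission
  imports Defs
begin

lemma pow_inner_shift:
  assumes sa: "self_adjoint B"
  shows "inner ((B ^^ (i + k)) v) ((B ^^ j) v) = inner ((B ^^ i) v) ((B ^^ (j + k)) v)"
proof (induction k arbitrary: i j)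
  case 0 then show ?case by simp
next
  case (Suc k)
  have "inner ((B ^^ (i + Suc k)) v) ((B ^^ j) v) = inner ((B ^^ (Suc i + k)) v) ((B ^^ j) v)" by simp
  also have "\<dots> = inner ((B ^^ Suc i) v) ((B ^^ (j + k)) v)" by (rule Suc.IH)
  also have "\<dots> = inner ((B ^^ i) v) ((B ^^ (j + Suc k)) v)"
    using sa unfolding self_adjoint_def by simp
  finally show ?case .
qed

lemma main:
  fixes B :: "'a::{real_inner, complete_space} \<Rightarrow> 'a"
  assumes sa: "self_adjoint B"
    and nb: "\<And>x. norm (B x) \<le> norm x"
    and neg: "\<forall>v. B v = - v \<longrightarrow> v = 0"
    and orth: "\<And>y. y - B y = 0 \<Longrightarrow> inner v y = 0"
  shows "(\<lambda>n. (B ^^ n) v) \<longlonglongrightarrow> 0"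
proof -
  have bl: "bounded_linear B" and sym: "\<And>x y. inner (B x) y = inner x (B y)"
    using sa unfolding self_adjoint_def by auto
  define w where "w n = (B ^^ n) v" for n
  have wS: "w (Suc n) = B (w n)" for n by (simp add: w_def)
  define a where "a n = (norm (w n))^2" for n
  have "decseq a"
    unfolding decseq_Suc_iff a_def wS using nb by (simp add: power_mono)
  then obtain L where aL: "a \<longlonglongrightarrow> L"
    using decseq_convergent[of a 0] unfolding a_def by auto
  have inn: "inner (w (2*n)) (w (2*m)) = a (n + m)" for n m
  proof -
    have s: "inner (w (i + k)) (w j) = inner (w i) (w (j + k))" for i j k
      unfolding w_def by (rule pow_inner_shift[OF sa])
    show ?thesis
    proof (cases "m \<le> n")
      case True
      have e: "(n+m) + (n-m) = 2*n" using True by simp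
      have "inner (w (2*n)) (w (2*m)) = inner (w ((n+m) + (n-m))) (w (2*m))"
        by (simp only: e)
      also have "\<dots> = inner (w (n+m)) (w (2*m + (n-m)))" by (rule s)
      also have "\<dots> = a (n+m)" using True by (simp add: a_def power2_norm_eq_inner add.commute)
      finally show ?thesis .
    next
      case False
      have e: "(n+m) + (m-n) = 2*m" using False by simp
      have "inner (w (2*n)) (w (2*m)) = inner (w (2*n)) (w ((n+m) + (m-n)))"
        by (simp only: e)
      also have "\<dots> = inner (w (2*n + (m-n))) (w (n+m))"
        by (metis inner_commute s)
      also have "\<dots> = a (n+m)" using False by (simp add: a_def power2_norm_eq_inner add.commute)
      finally show ?thesis .
    qed
  qed
  define r where "r k = w (2*k)" for k
  have innr: "inner (r n) (r m) = a (n + m)" for n m unfolding r_def by (rule inn)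
  have nr: "(norm (r n - r m))^2 = a (2*n) + a (2*m) - 2 * a (n+m)" for n m
  proof -
    have "(norm (r n - r m))^2 = inner (r n) (r n) - 2 * inner (r n) (r m) + inner (r m) (r m)"
      by (simp add: power2_norm_eq_inner inner_diff_left inner_diff_right inner_commute[of "r m" "r n"])
    also have "\<dots> = a (n+n) - 2 * a (n+m) + a (m+m)" by (simp only: innr)
    finally show ?thesis by (simp only: mult_2)
  qed
  have "Cauchy r"
  proof (rule metric_CauchyI)
    fix e :: real assume e: "e > 0"
    then have "e^2/4 > 0" by simp
    with aL obtain N where N: "\<And>k. k \<ge> N \<Longrightarrow> \<bar>a k - L\<bar> < e^2/4"
      unfolding LIMSEQ_def dist_real_def by blast
    show "\<exists>M. \<forall>m\<ge>M. \<forall>n\<ge>M. dist (r m) (r n) < e"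
    proof (intro exI allI impI)
      fix m n assume m: "m \<ge> N" and n: "n \<ge> N"
      have "(norm (r m - r n))^2 < e^2"
      proof -
        have "\<bar>a (2*m) - L\<bar> < e^2/4" "\<bar>a (2*n) - L\<bar> < e^2/4" "\<bar>a (m+n) - L\<bar> < e^2/4"
          using N m n by auto
        then show ?thesis unfolding nr by linarith
      qed
      then have "norm (r m - r n) < e"
        by (rule power_less_imp_less_base) (use e in auto)
      then show "dist (r m) (r n) < e" by (simp add: dist_norm)
    qed
  qed
  then obtain u where ru: "r \<longlonglongrightarrow> u" using Cauchy_convergent_iff convergent_def by blast
  have cB: "isCont B x" for x using bl by (simp add: linear_continuous_at)
  have "(\<lambda>k. B (B (r k))) \<longlonglongrightarrow> B (B u)"
    using ru cB by (metis isCont_tendsto_compose)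
  moreover have "(\<lambda>k. B (B (r k))) = (\<lambda>k. r (Suc k))"
    by (simp add: r_def wS[symmetric])
  moreover have "(\<lambda>k. r (Suc k)) \<longlonglongrightarrow> u" using ru by (rule LIMSEQ_Suc)
  ultimately have BBu: "B (B u) = u" using LIMSEQ_unique by metis
  have worth: "inner (w n) y = 0" if "y - B y = 0" for n y
  proof (induction n)
    case 0 then show ?case using orth that by (simp add: w_def)
  next
    case (Suc n)
    have "y = B y" using that by simp
    then show ?case using Suc sym by (metis wS)
  qed
  have uorth: "inner u y = 0" if "y - B y = 0" for y
  proof -
    have "(\<lambda>k. inner (r k) y) \<longlonglongrightarrow> inner u y"
      using ru by (intro tendsto_intros)
    moreover have "(\<lambda>k. inner (r k) y) = (\<lambda>k. 0)" unfolding r_def using worth[OF that] by simp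
    ultimately have "(\<lambda>k. 0::real) \<longlonglongrightarrow> inner u y" by simp
    then show ?thesis using LIMSEQ_unique tendsto_const by metis
  qed
  define z where "z = u + B u"
  have lin: "linear B" using bl bounded_linear.linear by blast
  have Bz: "B z = z" unfolding z_def using BBu linear_add[OF lin] by (simp add: add.commute)
  then have zK: "z - B z = 0" by simp
  have "inner z z = 0"
  proof -
    have "inner z z = inner u z + inner (B u) z" by (simp add: z_def inner_add_left)
    also have "inner (B u) z = inner u (B z)" by (rule sym)
    finally show ?thesis using Bz uorth[OF zK] by simp
  qed
  then have "z = 0" by simp
  then have "B u = - u" unfolding z_def by (simp add: eq_neg_iff_add_eq_0 add.commute)
  then have "u = 0" using neg by blast
  with ru have r0: "r \<longlonglongrightarrow> 0" by simp
  have wle: "norm (w n) \<le> norm (r (n div 2))" for n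
  proof -
    have "n = 2 * (n div 2) \<or> n = Suc (2 * (n div 2))" by presburger
    then show ?thesis
      by (metis nb order_refl r_def wS)
  qed
  have "(\<lambda>n. norm (w n)) \<longlonglongrightarrow> 0"
  proof (rule LIMSEQ_I)
    fix e :: real assume "e > 0"
    then obtain N where N: "\<forall>n\<ge>N. norm (r n - 0) < e" using r0 LIMSEQ_iff by blast
    show "\<exists>no. \<forall>n\<ge>no. norm (norm (w n) - 0) < e"
    proof (intro exI allI impI)
      fix n assume "n \<ge> 2*N"
      then have "n div 2 \<ge> N" by presburger
      then have "norm (r (n div 2)) < e" using N by simp
      then show "norm (norm (w n) - 0) < e" using wle[of n] by simp
    qed
  qed
  then show ?thesis unfolding w_def by (simp add: tendsto_norm_zero_iff)
qed

theorem theorem1p2: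
  fixes B P :: "'a::{real_inner, complete_space} \<Rightarrow> 'a"
    and f :: 'a and x :: "nat \<Rightarrow> 'a"
  assumes "self_adjoint B"
    and "spectral_radius B = 1"
    and "onorm B = 1"
    and "\<forall>v. B v = - v \<longrightarrow> v = 0"
    and "is_orth_proj P {v. v - B v = 0}"
    and "P f = 0"
    and "\<forall>n. x (Suc n) = B (x n) + f"
  shows "(\<lambda>n. norm (x n - B (x n) - f)) \<longlonglongrightarrow> 0"
proof -
  have bl: "bounded_linear B" and sym: "\<And>x y. inner (B x) y = inner x (B y)"
    using assms(1) unfolding self_adjoint_def by auto
  have nb: "norm (B y) \<le> norm y" for y using onorm[OF bl, of y] assms(3) by simp
  have lin: "linear B" using bl bounded_linear.linear by blast
  define d where "d n = x (Suc n) - x n" for n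
  have step: "x (Suc m) = B (x m) + f" for m using assms(7) by blast
  have dS: "d (Suc n) = B (d n)" for n
  proof -
    have "d (Suc n) = (B (x (Suc n)) + f) - x (Suc n)" unfolding d_def by (subst step[of "Suc n"]) (rule refl)
    also have "\<dots> = B (x (Suc n)) - B (x n)" using step[of n] by (simp add: algebra_simps)
    also have "\<dots> = B (d n)" unfolding d_def by (rule linear_diff[OF lin, symmetric])
    finally show ?thesis .
  qed
  have dn: "d n = (B ^^ n) (d 0)" for n
    by (induction n) (simp_all add: dS)
  have orth: "inner (d 0) y = 0" if "y - B y = 0" for y
  proof -
    have yK: "y \<in> {v. v - B v = 0}" using that by simp
    have "inner (f - P f) y = 0" using assms(5) yK unfolding is_orth_proj_def by blast
    then have f0: "inner f y = 0" using assms(6) by simp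
    have "B y = y" using that by simp
    then have "inner (B (x 0)) y = inner (x 0) y" using sym by metis
    then show ?thesis unfolding d_def step[of 0] using f0 by (simp add: inner_diff_left inner_add_left)
  qed
  have "(\<lambda>n. (B ^^ n) (d 0)) \<longlonglongrightarrow> 0"
    by (rule main[OF assms(1) nb assms(4) orth])
  moreover have "(\<lambda>n. (B ^^ n) (d 0)) = d" by (rule ext) (rule dn[symmetric])
  ultimately have "d \<longlonglongrightarrow> 0" by simp
  then have "(\<lambda>n. norm (d n)) \<longlonglongrightarrow> 0" by (rule tendsto_norm_zero)
  moreover have "norm (x n - B (x n) - f) = norm (d n)" for n
  proof -
    have "x n - B (x n) - f = - (x (Suc n) - x n)" unfolding step[of n] by (simp add: algebra_simps)
    then show ?thesis unfolding d_def by (metis norm_minus_cancel)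
  qed
  ultimately show ?thesis by simp
qed

end
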